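(* Let $x \in \mathbb{Z}$ and let $n \in \mathbb{N}$ be odd with $n \geq 5$, and suppose $x^2 + 7 = 2^n$. Then $n - 2 \equiv 3$, $5$, or $13 \pmod{42}$. *)

theory Defs
  imports Main
begin

end

theory Submission
  imports Defs
begin

fun wv :: "nat \<Rightarrow> int" where
  "wv 0 = 0" | "wv (Suc 0) = 1" | "wv (Suc (Suc m)) = wv (Suc m) - 2 * wv m"

fun wu :: "nat \<Rightarrow> int" where
  "wu 0 = 1" | "wu (Suc m) = - 2 * wv m"

fun wp :: "nat \<Rightarrow> int \<times> int" where
  "wp 0 = (0, 1)" | "wp (Suc m) = (case wp m of (p, q) \<Rightarrow> (q, q - 2 * p))"

lemma wp_eq: "wp m = (wv m, wv (Suc m))"
  by (induction m) auto

lemma wv_wp: "wv m = fst (wp m)"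
  by (simp add: wp_eq)

declare wv.simps(3)[simp del]

lemma wv_rec: "wv (k+2) = wv (k+1) - 2 * wv k"
  by (simp add: wv.simps(3))

lemma wv_Suc: "wv (Suc m) = wu m + wv m"
  by (cases m) (auto simp: wv.simps(3))

lemma wu_even: "m \<ge> 1 \<Longrightarrow> even (wu m)"
  by (cases m) auto

lemma base_case:
  fixes a b :: int
  assumes "a^2 + a*b + 2*b^2 = 1"
  shows "b = 0 \<and> (a = 1 \<or> a = -1)"
proof -
  have e: "(2*a+b)^2 + 7*b^2 = 4" using assms by (simp add: algebra_simps power2_eq_square)
  have "b = 0"
  proof (rule ccontr)
    assume "b \<noteq> 0"
    then have "0 < b^2" by simp
    then have "b^2 \<ge> 1" by linarith
    moreover have "(2*a+b)^2 \<ge> 0" by simp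
    ultimately show False using e by linarith
  qed
  then have "a^2 = 1" using assms by simp
  then have "a = 1 \<or> a = -1"
    by (metis power2_eq_1_iff)
  with \<open>b = 0\<close> show ?thesis by simp
qed

lemma key:
  fixes a b :: int
  assumes "a^2 + a*b + 2*b^2 = 2^m" and "\<not> (even a \<and> even b)"
  shows "\<exists>s\<in>{1,-1::int}. (a = s * wu m \<and> b = s * wv m) \<or> (a = s * (wu m + wv m) \<and> b = - s * wv m)"
  using assms
proof (induction m arbitrary: a b)
  case 0
  then have "b = 0 \<and> (a = 1 \<or> a = -1)" using base_case by simp
  then show ?case by auto
next
  case (Suc m)
  have "even (a^2 + a*b + 2*b^2)" using Suc.prems(1) by simp
  then have "even (a * (a + b))" by (simp add: power2_eq_square algebra_simps)
  then have "even a \<or> even (a + b)" by simp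
  then show ?case
  proof
    assume ea: "even a"
    then obtain c where c: "a = 2 * c" by blast
    have ob: "odd b" using ea Suc.prems(2) by simp
    define c' where "c' = c + b"
    define d' where "d' = - c"
    have n: "c'^2 + c'*d' + 2*d'^2 = 2^m"
    proof -
      have "4 * c^2 + 2*c*b + 2*b^2 = 2 * 2^m" using Suc.prems(1) c
        by (simp add: power2_eq_square algebra_simps)
      then have "2*c^2 + c*b + b^2 = 2^m" by simp
      then show ?thesis unfolding c'_def d'_def by (simp add: power2_eq_square algebra_simps)
    qed
    have ne: "\<not> (even c' \<and> even d')" unfolding c'_def d'_def using ob by auto
    obtain s where s: "s \<in> {1,-1::int}"
      and h: "(c' = s * wu m \<and> d' = s * wv m) \<or> (c' = s * (wu m + wv m) \<and> d' = - s * wv m)"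
      using Suc.IH[OF n ne] by blast
    have ab: "a = -2 * d' \<and> b = c' + d'" unfolding c'_def d'_def using c by simp
    from h show ?case
    proof
      assume h1: "c' = s * wu m \<and> d' = s * wv m"
      have "a = s * wu (Suc m) \<and> b = s * wv (Suc m)"
        using ab h1 by (simp add: wv_Suc algebra_simps)
      then show ?thesis using s by blast
    next
      assume h2: "c' = s * (wu m + wv m) \<and> d' = - s * wv m"
      show ?thesis
      proof (cases m)
        case 0
        then have "a = s * wu (Suc m) \<and> b = s * wv (Suc m)"
          using ab h2 by simp
        then show ?thesis using s by blast
      next
        case (Suc k)
        have "even (wu m)" using Suc wu_even by simp
        then have "even b" using ab h2 by simp
        then show ?thesis using ob by simp
      qed
    qed
  next
    assume eab: "even (a + b)"
    then obtain c where c: "a + b = 2 * c" by blast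
    have ob: "odd b" using eab Suc.prems(2) by auto
    define c' where "c' = - b"
    define d' where "d' = c"
    have n: "c'^2 + c'*d' + 2*d'^2 = 2^m"
    proof -
      have a: "a = 2*c - b" using c by simp
      have "(2*c - b)^2 + (2*c-b)*b + 2*b^2 = 2 * 2^m" using Suc.prems(1) a by simp
      then have "2*c^2 - c*b + b^2 = 2^m" by (simp add: power2_eq_square algebra_simps)
      then show ?thesis unfolding c'_def d'_def by (simp add: power2_eq_square algebra_simps)
    qed
    have ne: "\<not> (even c' \<and> even d')" unfolding c'_def d'_def using ob by auto
    obtain s where s: "s \<in> {1,-1::int}"
      and h: "(c' = s * wu m \<and> d' = s * wv m) \<or> (c' = s * (wu m + wv m) \<and> d' = - s * wv m)"
      using Suc.IH[OF n ne] by blast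
    have ab: "a = c' + 2 * d' \<and> b = - c'" unfolding c'_def d'_def using c by simp
    from h show ?case
    proof
      assume h2: "c' = s * (wu m + wv m) \<and> d' = - s * wv m"
      have "a = s * (wu (Suc m) + wv (Suc m)) \<and> b = - s * wv (Suc m)"
        using ab h2 by (simp add: wv_Suc algebra_simps)
      then show ?thesis using s by blast
    next
      assume h1: "c' = s * wu m \<and> d' = s * wv m"
      show ?thesis
      proof (cases m)
        case 0
        then have "a = s * (wu (Suc m) + wv (Suc m)) \<and> b = - s * wv (Suc m)"
          using ab h1 by simp
        then show ?thesis using s by blast
      next
        case (Suc k)
        have "even (wu m)" using Suc wu_even by simp
        then have "even b" using ab h1 by simp
        then show ?thesis using ob by simp
      qed
    qed
  qed
qed

lemma aux7: "(A::int) mod 7 = B mod 7 \<Longrightarrow> C mod 7 = D mod 7 \<Longrightarrow> (C - 2*A) mod 7 = (D - 2*B) mod 7"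
  by (metis mod_diff_cong mod_mult_cong)

lemma aux4a: "(X::int) mod 4 = 3 \<Longrightarrow> Y mod 4 = 1 \<Longrightarrow> (X - 2*Y) mod 4 = 1"
proof -
  assume a: "X mod 4 = 3" "Y mod 4 = 1"
  have "(X - 2*Y) mod 4 = (3 - 2*1) mod 4"
    by (rule mod_diff_cong) (use a in \<open>simp_all add: mod_mult_right_eq[symmetric]\<close>)
  then show ?thesis by simp
qed

lemma aux4b: "(X::int) mod 4 = 1 \<Longrightarrow> Y mod 4 = 3 \<Longrightarrow> (X - 2*Y) mod 4 = 3"
proof -
  assume a: "X mod 4 = 1" "Y mod 4 = 3"
  have "(X - 2*Y) mod 4 = (1 - 2*3) mod 4"
    by (rule mod_diff_cong) (use a in \<open>simp_all add: mod_mult_right_eq[symmetric]\<close>)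
  then show ?thesis by simp
qed

lemma wv_mod4: "wv (2*k+2) mod 4 = 1 \<and> wv (2*k+3) mod 4 = 3"
proof (induction k)
  case 0
  then show ?case by (simp add: wv_wp eval_nat_numeral)
next
  case (Suc k)
  have e1: "wv (2*Suc k+2) = wv (2*k+3) - 2 * wv (2*k+2)"
  proof -
    have "wv ((2*k+2)+2) = wv ((2*k+2)+1) - 2*wv(2*k+2)" by (rule wv_rec)
    moreover have "(2*k+2)+2 = 2*Suc k+2" "(2*k+2)+1 = 2*k+3" by simp_all
    ultimately show ?thesis by metis
  qed
  have e2: "wv (2*Suc k+3) = wv (2*Suc k+2) - 2 * wv (2*k+3)"
  proof -
    have "wv ((2*k+3)+2) = wv ((2*k+3)+1) - 2*wv(2*k+3)" by (rule wv_rec)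
    moreover have "(2*k+3)+2 = 2*Suc k+3" "(2*k+3)+1 = 2*Suc k+2" by simp_all
    ultimately show ?thesis by metis
  qed
  have c1: "wv (2*Suc k+2) mod 4 = 1" unfolding e1 using Suc.IH aux4a by blast
  have c2: "wv (2*Suc k+3) mod 4 = 3" unfolding e2 using Suc.IH c1 aux4b by blast
  show ?case using c1 c2 by blast
qed

lemma wv_per: "wv (m+21) mod 7 = wv m mod 7 \<and> wv (m+22) mod 7 = wv (m+1) mod 7"
proof (induction m)
  case 0
  then show ?case by (simp add: wv_wp eval_nat_numeral)
next
  case (Suc m)
  have e1: "wv (Suc m + 22) = wv (m+22) - 2 * wv (m+21)"
    using wv_rec[of "m+21"] by (simp add: algebra_simps)
  have e2: "wv (Suc m + 1) = wv (m+1) - 2 * wv m"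
    using wv_rec[of "m"] by (simp add: algebra_simps)
  have eq: "Suc m + 21 = m + 22" by simp
  have c1: "wv (Suc m + 21) mod 7 = wv (Suc m) mod 7" unfolding eq using Suc.IH by (simp only: Suc_eq_plus1)
  have c2: "wv (Suc m + 22) mod 7 = wv (Suc m + 1) mod 7"
    unfolding e1 e2 by (rule aux7[OF conjunct1[OF Suc.IH] conjunct2[OF Suc.IH]])
  show ?case using c1 c2 by simp
qed

lemma wv_per_mod: "wv m mod 7 = wv (m mod 21) mod 7"
proof (induction m rule: less_induct)
  case (less m)
  show ?case
  proof (cases "m < 21")
    case True then show ?thesis by simp
  next
    case False
    then obtain k where k: "m = k + 21" by (metis add.commute le_add_diff_inverse not_less)
    have "wv m mod 7 = wv k mod 7" unfolding k by (rule conjunct1[OF wv_per])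
    also have "\<dots> = wv (k mod 21) mod 7" by (rule less.IH) (simp add: k)
    also have "k mod 21 = m mod 21" unfolding k by simp
    finally show ?thesis .
  qed
qed

lemma table_all: "\<forall>r \<in> set [0..<21]. wv r mod 7 = 6 \<longrightarrow> r \<in> {3,5,13}"
  by (simp add: wv_wp eval_nat_numeral upt_rec)

lemma table: "r < 21 \<Longrightarrow> wv r mod 7 = 6 \<Longrightarrow> r \<in> {3,5,13}"
  using table_all by simp

lemma fin: fixes m :: nat assumes om: "odd m" and h: "m mod 21 = 3 \<or> m mod 21 = 5 \<or> m mod 21 = 13"
  shows "m mod 42 = 3 \<or> m mod 42 = 5 \<or> m mod 42 = 13"
proof -
  define r where "r = m mod 42"
  have r1: "m mod 21 = r mod 21" unfolding r_def by (simp add: mod_mod_cancel)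
  have r2: "odd r" unfolding r_def using om by (simp add: odd_iff_mod_2_eq_one mod_mod_cancel)
  have rl: "r < 42" unfolding r_def by simp
  have rd: "r = 21 * (r div 21) + r mod 21" by simp
  have "r div 21 < 2" using rl by simp
  then have "r div 21 = 0 \<or> r div 21 = 1" by linarith
  then have "r = r mod 21 \<or> r = r mod 21 + 21" by (elim disjE) (use rd in linarith)+
  then show ?thesis using r1 r2 h unfolding r_def[symmetric] by auto
qed

theorem mainTheorem3:
  fixes x :: int and n :: nat
  assumes "odd n" and "n \<ge> 5" and "x ^ 2 + 7 = 2 ^ n"
  shows "(n - 2) mod 42 \<in> {3, 5, 13}"
proof -
  define m where "m = n - 2"
  have nm: "n = m + 2" using assms(2) m_def by simp
  have om: "odd m" using assms(1) nm by simp
  have m3: "m \<ge> 3" using assms(2) nm by simp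
  have "odd (x^2 + 7 - 7)" using assms(3) nm by simp
  then have ox: "odd x" by simp
  then obtain a where a: "x = 2*a + 1" by (metis oddE)
  have "4 * (a^2 + a*1 + 2*1^2) = 4 * 2^m"
    using assms(3) nm a by (simp add: power2_eq_square algebra_simps)
  then have "a^2 + a*1 + 2*1^2 = 2^m" by simp
  from key[OF this] have wvpm: "wv m = 1 \<or> wv m = -1" by auto
  define k where "k = (m - 3) div 2"
  have k: "m = 2*k+3" unfolding k_def using om m3 by presburger
  have "wv m mod 4 = 3" using wv_mod4 k by simp
  then have "wv m = -1" using wvpm by auto
  then have "wv (m mod 21) mod 7 = 6" using wv_per_mod[of m] by simp
  then have "m mod 21 \<in> {3,5,13}" using table by simp
  then have "m mod 21 = 3 \<or> m mod 21 = 5 \<or> m mod 21 = 13" by simp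
  then have "m mod 42 = 3 \<or> m mod 42 = 5 \<or> m mod 42 = 13" using fin[OF om] by blast
  then have "m mod 42 \<in> {3,5,13}" by simp
  then show ?thesis using m_def by simp
qed

end
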